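(* Let $G$ be an oriented graph on $[n]$ with $|\mathcal{P}(G)|\ge 1$. Then \[\max_{\sigma,\rho\in\mathcal{P}(G)} d_\ell(\sigma,\rho)\le \max_{1\le i\le n}\{\,n-|R(i)|-|R^{-1}(i)|-1\,\}.\]
   Context: Write a permutation $\sigma\in S_n$ as $\sigma=\sigma_1\cdots\sigma_n$. A permutation $\sigma$ satisfies an oriented graph $G=([n],E)$ if $\sigma_u>\sigma_v$ for every oriented edge $u\to v\in E$; $\mathcal{P}(G)$ is the set of permutations satisfying $G$. Write $u\rightsquigarrow v$ if there is an oriented path from $u$ to $v$ in $G$. For a vertex $v$, $R(v)=\{u\in[n]\setminus\{v\}: v\rightsquigarrow u\}$ and $R^{-1}(v)=\{u\in[n]\setminus\{v\}: u\rightsquigarrow v\}$. The $\ell_\infty$-metric is $d_\ell(\sigma,\rho)=\max_{1\le i\le n}|\sigma_i-\rho_i|$. *)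

theory Defs
  imports "HOL-Combinatorics.Permutations"
begin

definition oriented_graph :: "nat \<Rightarrow> (nat \<times> nat) set \<Rightarrow> bool" where
  "oriented_graph n E \<longleftrightarrow> E \<subseteq> {1..n} \<times> {1..n} \<and>
     (\<forall>u v. (u, v) \<in> E \<longrightarrow> u \<noteq> v \<and> (v, u) \<notin> E)"

definition satisfying_perms :: "nat \<Rightarrow> (nat \<times> nat) set \<Rightarrow> (nat \<Rightarrow> nat) set" where
  "satisfying_perms n E = {\<sigma>. \<sigma> permutes {1..n} \<and> (\<forall>(u, v) \<in> E. \<sigma> u > \<sigma> v)}"

definition reach_out :: "nat \<Rightarrow> (nat \<times> nat) set \<Rightarrow> nat \<Rightarrow> nat set" where
  "reach_out n E v = {u \<in> {1..n} - {v}. (v, u) \<in> E\<^sup>+}"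

definition reach_in :: "nat \<Rightarrow> (nat \<times> nat) set \<Rightarrow> nat \<Rightarrow> nat set" where
  "reach_in n E v = {u \<in> {1..n} - {v}. (u, v) \<in> E\<^sup>+}"

definition linf_dist :: "nat \<Rightarrow> (nat \<Rightarrow> nat) \<Rightarrow> (nat \<Rightarrow> nat) \<Rightarrow> int" where
  "linf_dist n \<sigma> \<rho> = Max {\<bar>int (\<sigma> i) - int (\<rho> i)\<bar> | i. i \<in> {1..n}}"

end

theory Submission
  imports Defs
begin

lemma sat_trancl:
  assumes "\<sigma> \<in> satisfying_perms n E" "(u, v) \<in> E\<^sup>+"
  shows "\<sigma> u > \<sigma> v"
  using assms(2)
proof (induction rule: trancl_induct)
  case (base y)
  then show ?case using assms(1) unfolding satisfying_perms_def by blast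
next
  case (step y z)
  then have "\<sigma> y > \<sigma> z" using assms(1) unfolding satisfying_perms_def by blast
  then show ?case using step by simp
qed

lemma perm_range:
  assumes "\<sigma> \<in> satisfying_perms n E" "u \<in> {1..n}"
  shows "\<sigma> u \<in> {1..n}"
proof -
  have "\<sigma> permutes {1..n}" using assms(1) by (simp add: satisfying_perms_def)
  then show ?thesis using permutes_in_image[of \<sigma> "{1..n}" u] assms(2) by blast
qed

lemma perm_inj:
  assumes "\<sigma> \<in> satisfying_perms n E"
  shows "inj \<sigma>"
proof -
  have "\<sigma> permutes {1..n}" using assms(1) by (simp add: satisfying_perms_def)
  then show ?thesis by (rule permutes_inj)
qed

lemma lower:
  assumes "\<sigma> \<in> satisfying_perms n E" "i \<in> {1..n}"
  shows "card (reach_out n E i) + 1 \<le> \<sigma> i"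
proof -
  have "\<sigma> ` reach_out n E i \<subseteq> {1..<\<sigma> i}"
  proof
    fix x assume "x \<in> \<sigma> ` reach_out n E i"
    then obtain u where u: "u \<in> reach_out n E i" "x = \<sigma> u" by auto
    then have "u \<in> {1..n}" "(i, u) \<in> E\<^sup>+" unfolding reach_out_def by auto
    then have "\<sigma> u \<in> {1..n}" "\<sigma> i > \<sigma> u" using perm_range[OF assms(1)] sat_trancl[OF assms(1)] by blast+
    then show "x \<in> {1..<\<sigma> i}" using u(2) by simp
  qed
  then have "card (\<sigma> ` reach_out n E i) \<le> card {1..<\<sigma> i}" by (intro card_mono) auto
  moreover have "card (\<sigma> ` reach_out n E i) = card (reach_out n E i)"
    using perm_inj[OF assms(1)] by (meson card_image inj_on_subset subset_UNIV)
  moreover have "\<sigma> i \<ge> 1" using perm_range[OF assms] by auto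
  ultimately show ?thesis by simp
qed

lemma upper:
  assumes "\<sigma> \<in> satisfying_perms n E" "i \<in> {1..n}"
  shows "\<sigma> i + card (reach_in n E i) \<le> n"
proof -
  have "\<sigma> ` reach_in n E i \<subseteq> {\<sigma> i<..n}"
  proof
    fix x assume "x \<in> \<sigma> ` reach_in n E i"
    then obtain u where u: "u \<in> reach_in n E i" "x = \<sigma> u" by auto
    then have "u \<in> {1..n}" "(u, i) \<in> E\<^sup>+" unfolding reach_in_def by auto
    then have "\<sigma> u \<in> {1..n}" "\<sigma> i < \<sigma> u" using perm_range[OF assms(1)] sat_trancl[OF assms(1)] by blast+
    then show "x \<in> {\<sigma> i<..n}" using u(2) by simp
  qed
  then have "card (\<sigma> ` reach_in n E i) \<le> card {\<sigma> i<..n}" by (intro card_mono) auto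
  moreover have "card (\<sigma> ` reach_in n E i) = card (reach_in n E i)"
    using perm_inj[OF assms(1)] by (meson card_image inj_on_subset subset_UNIV)
  moreover have "\<sigma> i \<le> n" using perm_range[OF assms] by auto
  ultimately show ?thesis by simp
qed

theorem mainTheorem3:
  fixes n :: nat and E :: "(nat \<times> nat) set"
  assumes "n \<ge> 1"
    and "oriented_graph n E"
    and "card (satisfying_perms n E) \<ge> 1"
  shows "Max {linf_dist n \<sigma> \<rho> | \<sigma> \<rho>. \<sigma> \<in> satisfying_perms n E \<and> \<rho> \<in> satisfying_perms n E}
         \<le> Max {int n - int (card (reach_out n E i)) - int (card (reach_in n E i)) - 1 | i. i \<in> {1..n}}"
proof -
  let ?S = "satisfying_perms n E"
  let ?B = "{int n - int (card (reach_out n E i)) - int (card (reach_in n E i)) - 1 | i. i \<in> {1..n}}"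
  have finS: "finite ?S" and neS: "?S \<noteq> {}" using assms(3) card.infinite by fastforce+
  have finB: "finite ?B" by simp
  have each: "linf_dist n \<sigma> \<rho> \<le> Max ?B" if s: "\<sigma> \<in> ?S" and r: "\<rho> \<in> ?S" for \<sigma> \<rho>
  proof -
    have "\<bar>int (\<sigma> i) - int (\<rho> i)\<bar> \<le> Max ?B" if i: "i \<in> {1..n}" for i
    proof -
      have "\<bar>int (\<sigma> i) - int (\<rho> i)\<bar> \<le> int n - int (card (reach_out n E i)) - int (card (reach_in n E i)) - 1"
        using lower[OF s i] upper[OF s i] lower[OF r i] upper[OF r i] by linarith
      also have "\<dots> \<le> Max ?B" using i finB by (intro Max_ge) auto
      finally show ?thesis .
    qed
    then show ?thesis unfolding linf_dist_def using assms(1)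
      by (subst Max_le_iff) auto
  qed
  have "finite {linf_dist n \<sigma> \<rho> | \<sigma> \<rho>. \<sigma> \<in> ?S \<and> \<rho> \<in> ?S}"
  proof -
    have "{linf_dist n \<sigma> \<rho> | \<sigma> \<rho>. \<sigma> \<in> ?S \<and> \<rho> \<in> ?S} = (\<lambda>(a,b). linf_dist n a b) ` (?S \<times> ?S)"
      by auto
    then show ?thesis using finS by simp
  qed
  moreover obtain s0 where "s0 \<in> ?S" using neS by blast
  then have "linf_dist n s0 s0 \<in> {linf_dist n \<sigma> \<rho> | \<sigma> \<rho>. \<sigma> \<in> ?S \<and> \<rho> \<in> ?S}" by blast
  ultimately show ?thesis using each by (subst Max_le_iff) auto
qed

end
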